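(* Let $2\le k\le n$. For every Bayesian persuasion instance with $n$ actions and $k$ signals there exists an optimal signaling scheme with $k$ signals that is direct and persuasive and uses its $k$ signals to recommend $k$ distinct actions. Moreover, if the instance is symmetric, there exists an optimal direct and persuasive scheme with $k$ signals whose signals recommend exactly the actions $1,\dots,k$.
   Context: A Bayesian persuasion instance: a receiver chooses one of the actions $[n]=\{1,\dots,n\}$. Each action $i$ has a type $\theta_i$ from a finite set $\Theta_i$; the state of nature $\boldsymbol\theta=(\theta_1,\dots,\theta_n)$ is drawn from a commonly known distribution $q$ on $\Theta\subseteq\Theta_1\times\dots\times\Theta_n$, with $q_{\boldsymbol\theta}$ the probability of $\boldsymbol\theta$. Each type $t$ has a receiver value $\rho(t)$ and a sender value $\xi(t)$; if the receiver takes action $i$ in state $\boldsymbol\theta$, the receiver gets $\rho(\theta_i)$ and the sender gets $\xi(\theta_i)$. A signaling scheme with $k$ signals is a map $\varphi$ assigning to each state $\boldsymbol\theta$ a probability distribution $\varphi(\boldsymbol\theta,\cdot)$ on a signal set $\Sigma$ with $|\Sigma|=k$. The sender commits to $\varphi$, observes $\boldsymbol\theta$, sends $\sigma\sim\varphi(\boldsymbol\theta,\cdot)$; the receiver, knowing $q$ and $\varphi$, chooses for each signal an action maximizing her conditional expected utility given $\sigma$, breaking ties in favor of the sender (and remaining ties by a fixed rule). $u_{\mathcal S}(\varphi)$ and $u_{\mathcal R}(\varphi)$ denote the resulting expected utilities of sender and receiver. A scheme is optimal with $k$ signals if it maximizes $u_{\mathcal S}$ over all schemes with $k$ signals. A scheme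 is direct if each signal is identified with an action it recommends; a direct scheme is persuasive if for every signal $\sigma$ sent with positive probability and recommending action $i$, $\mathbb E[\rho(\theta_i)\mid\sigma]\ge \mathbb E[\rho(\theta_j)\mid \sigma]$ for all $j\in[n]$. An instance is symmetric if $q_{\boldsymbol\theta}=q_{\boldsymbol\theta'}$ whenever $\boldsymbol\theta'$ is a permutation of $\boldsymbol\theta$. *)

theory Defs
  imports Complex_Main "HOL-Combinatorics.Permutations"
begin

text \<open>Actions are 1..n (nat). A state is a function
  theta :: nat => 't giving the type of each action (only coordinates 1..n matter).
  Theta is the finite set of states, q the prior probabilities on Theta,
  rho / xi the receiver / sender values of a type.
  A signaling scheme with k signals uses the signal set {..<k} (0..k-1) and is
  a function phi :: state => signal => real.\<close>

definition bp_instance ::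
  "nat \<Rightarrow> (nat \<Rightarrow> 't) set \<Rightarrow> ((nat \<Rightarrow> 't) \<Rightarrow> real) \<Rightarrow> bool" where
  "bp_instance n Theta q \<longleftrightarrow>
     finite Theta \<and> (\<forall>th\<in>Theta. 0 \<le> q th) \<and> (\<Sum>th\<in>Theta. q th) = 1"

definition scheme ::
  "(nat \<Rightarrow> 't) set \<Rightarrow> nat \<Rightarrow> ((nat \<Rightarrow> 't) \<Rightarrow> nat \<Rightarrow> real) \<Rightarrow> bool" where
  "scheme Theta k phi \<longleftrightarrow>
     (\<forall>th\<in>Theta. (\<forall>s<k. 0 \<le> phi th s) \<and> (\<Sum>s<k. phi th s) = 1)"

definition sig_prob ::
  "(nat \<Rightarrow> 't) set \<Rightarrow> ((nat \<Rightarrow> 't) \<Rightarrow> real) \<Rightarrow> ((nat \<Rightarrow> 't) \<Rightarrow> nat \<Rightarrow> real) \<Rightarrow> nat \<Rightarrow> real" where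
  "sig_prob Theta q phi s = (\<Sum>th\<in>Theta. q th * phi th s)"

definition joint_val ::
  "(nat \<Rightarrow> 't) set \<Rightarrow> ((nat \<Rightarrow> 't) \<Rightarrow> real) \<Rightarrow> ((nat \<Rightarrow> 't) \<Rightarrow> nat \<Rightarrow> real)
    \<Rightarrow> nat \<Rightarrow> nat \<Rightarrow> ('t \<Rightarrow> real) \<Rightarrow> real" where
  "joint_val Theta q phi s i f = (\<Sum>th\<in>Theta. q th * phi th s * f (th i))"

definition cond_exp ::
  "(nat \<Rightarrow> 't) set \<Rightarrow> ((nat \<Rightarrow> 't) \<Rightarrow> real) \<Rightarrow> ((nat \<Rightarrow> 't) \<Rightarrow> nat \<Rightarrow> real)
    \<Rightarrow> nat \<Rightarrow> nat \<Rightarrow> ('t \<Rightarrow> real) \<Rightarrow> real" where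
  "cond_exp Theta q phi s i f = joint_val Theta q phi s i f / sig_prob Theta q phi s"

text \<open>For a signal of positive probability, maximising the unnormalised joint value is
  the same as maximising the conditional expectation; for signals of probability 0
  all actions are best responses and the signal contributes 0 anyway.\<close>
definition best_resp ::
  "nat \<Rightarrow> (nat \<Rightarrow> 't) set \<Rightarrow> ((nat \<Rightarrow> 't) \<Rightarrow> real) \<Rightarrow> ('t \<Rightarrow> real)
    \<Rightarrow> ((nat \<Rightarrow> 't) \<Rightarrow> nat \<Rightarrow> real) \<Rightarrow> nat \<Rightarrow> nat set" where
  "best_resp n Theta q rho phi s =
     {i\<in>{1..n}. \<forall>j\<in>{1..n}. joint_val Theta q phi s j rho \<le> joint_val Theta q phi s i rho}"

text \<open>Sender's expected utility: for each signal the receiver picks a best response,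
  ties broken in favour of the sender (remaining ties do not affect the sender).\<close>
definition sender_util ::
  "nat \<Rightarrow> nat \<Rightarrow> (nat \<Rightarrow> 't) set \<Rightarrow> ((nat \<Rightarrow> 't) \<Rightarrow> real) \<Rightarrow> ('t \<Rightarrow> real) \<Rightarrow> ('t \<Rightarrow> real)
    \<Rightarrow> ((nat \<Rightarrow> 't) \<Rightarrow> nat \<Rightarrow> real) \<Rightarrow> real" where
  "sender_util n k Theta q rho xi phi =
     (\<Sum>s<k. Max ((\<lambda>i. joint_val Theta q phi s i xi) ` best_resp n Theta q rho phi s))"

definition optimal_scheme ::
  "nat \<Rightarrow> nat \<Rightarrow> (nat \<Rightarrow> 't) set \<Rightarrow> ((nat \<Rightarrow> 't) \<Rightarrow> real) \<Rightarrow> ('t \<Rightarrow> real) \<Rightarrow> ('t \<Rightarrow> real)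
    \<Rightarrow> ((nat \<Rightarrow> 't) \<Rightarrow> nat \<Rightarrow> real) \<Rightarrow> bool" where
  "optimal_scheme n k Theta q rho xi phi \<longleftrightarrow>
     scheme Theta k phi \<and>
     (\<forall>psi. scheme Theta k psi \<longrightarrow>
        sender_util n k Theta q rho xi psi \<le> sender_util n k Theta q rho xi phi)"

text \<open>A direct scheme: each signal s < k is identified with the action rec s it
  recommends; persuasive: for each signal of positive probability the recommended
  action maximises the receiver's conditional expected utility.\<close>
definition direct_persuasive ::
  "nat \<Rightarrow> nat \<Rightarrow> (nat \<Rightarrow> 't) set \<Rightarrow> ((nat \<Rightarrow> 't) \<Rightarrow> real) \<Rightarrow> ('t \<Rightarrow> real)
    \<Rightarrow> ((nat \<Rightarrow> 't) \<Rightarrow> nat \<Rightarrow> real) \<Rightarrow> (nat \<Rightarrow> nat) \<Rightarrow> bool" where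
  "direct_persuasive n k Theta q rho phi rec \<longleftrightarrow>
     (\<forall>s<k. rec s \<in> {1..n}) \<and>
     (\<forall>s<k. sig_prob Theta q phi s > 0 \<longrightarrow>
        (\<forall>j\<in>{1..n}. cond_exp Theta q phi s j rho \<le> cond_exp Theta q phi s (rec s) rho))"

definition symmetric_inst ::
  "nat \<Rightarrow> (nat \<Rightarrow> 't) set \<Rightarrow> ((nat \<Rightarrow> 't) \<Rightarrow> real) \<Rightarrow> bool" where
  "symmetric_inst n Theta q \<longleftrightarrow>
     (\<forall>p th. p permutes {1..n} \<longrightarrow>
        (if th \<in> Theta then q th else 0) = (if th \<circ> p \<in> Theta then q (th \<circ> p) else 0))"

end

theory Submission
  imports Defs "HOL-Analysis.Analysis"
begin


definition pers where
  "pers n k Theta q rho phi a \<longleftrightarrow> (\<forall>s<k. \<forall>j\<in>{1..n}.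
     joint_val Theta q phi s j rho \<le> joint_val Theta q phi s (a s) rho)"

definition Va where
  "Va k Theta q xi phi a = (\<Sum>s<k. joint_val Theta q phi s (a s) xi)"

lemma Va_le_util:
  assumes "\<forall>s<k. a s \<in> {1..n}" "pers n k Theta q rho phi a"
  shows "Va k Theta q xi phi a \<le> sender_util n k Theta q rho xi phi"
  unfolding Va_def sender_util_def
proof (rule sum_mono)
  fix s assume "s \<in> {..<k}"
  then have "a s \<in> best_resp n Theta q rho phi s"
    using assms by (auto simp: best_resp_def pers_def)
  moreover have "finite (best_resp n Theta q rho phi s)" by (simp add: best_resp_def)
  ultimately show "joint_val Theta q phi s (a s) xi
     \<le> Max ((\<lambda>i. joint_val Theta q phi s i xi) ` best_resp n Theta q rho phi s)"
    by (intro Max_ge) auto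
qed

lemma best_resp_ne:
  assumes "1 \<le> n" shows "best_resp n Theta q rho phi s \<noteq> {}"
proof -
  let ?F = "\<lambda>j. joint_val Theta q phi s j rho"
  have "Max (?F ` {1..n}) \<in> ?F ` {1..n}" using assms by (intro Max_in) auto
  then obtain i where i: "i \<in> {1..n}" "?F i = Max (?F ` {1..n})" by auto
  then have "i \<in> best_resp n Theta q rho phi s"
    unfolding best_resp_def by (auto intro!: Max_ge)
  then show ?thesis by auto
qed

lemma util_attained:
  assumes "1 \<le> n"
  shows "\<exists>a. (\<forall>s<k. a s \<in> {1..n}) \<and> pers n k Theta q rho phi a
     \<and> Va k Theta q xi phi a = sender_util n k Theta q rho xi phi"
proof -
  have "\<exists>i. i \<in> best_resp n Theta q rho phi s \<and> joint_val Theta q phi s i xi =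
     Max ((\<lambda>i. joint_val Theta q phi s i xi) ` best_resp n Theta q rho phi s)" for s
  proof -
    have "Max ((\<lambda>i. joint_val Theta q phi s i xi) ` best_resp n Theta q rho phi s)
       \<in> (\<lambda>i. joint_val Theta q phi s i xi) ` best_resp n Theta q rho phi s"
      using best_resp_ne[OF assms] by (intro Max_in) (auto simp: best_resp_def)
    then show ?thesis by force
  qed
  then obtain a where a: "\<And>s. a s \<in> best_resp n Theta q rho phi s \<and> joint_val Theta q phi s (a s) xi =
     Max ((\<lambda>i. joint_val Theta q phi s i xi) ` best_resp n Theta q rho phi s)" by metis
  show ?thesis
    by (rule exI[of _ a]) (use a in \<open>auto simp: pers_def Va_def sender_util_def best_resp_def\<close>)
qed



lemma merge:
  fixes phi :: "(nat \<Rightarrow> 't) \<Rightarrow> nat \<Rightarrow> real"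
  assumes sch: "scheme Theta k phi" and aN: "\<forall>s<k. a s \<in> {1..n}"
    and pa: "pers n k Theta q rho phi a" and kn: "k \<le> n"
  shows "\<exists>psi b. scheme Theta k psi \<and> (\<forall>s<k. b s \<in> {1..n}) \<and> inj_on b {..<k}
     \<and> pers n k Theta q rho psi b \<and> Va k Theta q xi psi b = Va k Theta q xi phi a"
proof -
  define K where "K = {..<k}"
  define Reps where "Reps = {s\<in>K. \<forall>s'<s. a s' \<noteq> a s}"
  have RK: "Reps \<subseteq> K" by (auto simp: Reps_def)
  have injR: "inj_on a Reps"
  proof
    fix x y assume "x \<in> Reps" "y \<in> Reps" "a x = a y"
    then show "x = y" unfolding Reps_def
      by (metis (mono_tags, lifting) linorder_neqE_nat mem_Collect_eq)
  qed
  have imR: "a ` Reps = a ` K"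
  proof
    show "a ` Reps \<subseteq> a ` K" using RK by auto
  next
    show "a ` K \<subseteq> a ` Reps"
    proof
      fix r assume "r \<in> a ` K"
      then obtain s where s: "s \<in> K" "a s = r" by auto
      define s0 where "s0 = (LEAST s'. a s' = r)"
      have "a s0 = r" unfolding s0_def by (rule LeastI[of _ s]) (rule s(2))
      moreover have "s0 \<le> s" unfolding s0_def by (rule Least_le) (rule s(2))
      moreover have "\<forall>s'<s0. a s' \<noteq> a s0"
      proof (intro allI impI)
        fix s' assume "s' < s0"
        then have "\<not> a s' = r" unfolding s0_def by (rule not_less_Least)
        then show "a s' \<noteq> a s0" using \<open>a s0 = r\<close> by simp
      qed
      ultimately have "s0 \<in> Reps" using s by (auto simp: Reps_def K_def)
      then show "r \<in> a ` Reps" using \<open>a s0 = r\<close> by auto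
    qed
  qed
  have finK: "finite K" by (simp add: K_def)
  have key: "(\<Sum>s\<in>K. if s \<in> Reps then (\<Sum>s'\<in>{s'\<in>K. a s' = a s}. F s') else 0) = (\<Sum>s\<in>K. F s)"
    for F :: "nat \<Rightarrow> real"
  proof -
    have "(\<Sum>s\<in>K. if s \<in> Reps then (\<Sum>s'\<in>{s'\<in>K. a s' = a s}. F s') else 0)
        = (\<Sum>s\<in>Reps. (\<Sum>s'\<in>{s'\<in>K. a s' = a s}. F s'))"
      using RK finK by (simp add: sum.If_cases Int_absorb1)
    also have "\<dots> = (\<Sum>r\<in>a ` Reps. (\<Sum>s'\<in>{s'\<in>K. a s' = r}. F s'))"
      by (simp add: sum.reindex[OF injR])
    also have "\<dots> = (\<Sum>s\<in>K. F s)"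
      unfolding imR by (rule sum.image_gen[symmetric]) (rule finK)
    finally show ?thesis .
  qed
  define psi where "psi = (\<lambda>th s. if s \<in> Reps then (\<Sum>s'\<in>{s'\<in>K. a s' = a s}. phi th s') else 0)"
  have jv: "joint_val Theta q psi s j f = (if s \<in> Reps then
      (\<Sum>s'\<in>{s'\<in>K. a s' = a s}. joint_val Theta q phi s' j f) else 0)" for s j f
  proof (cases "s \<in> Reps")
    case True
    have "joint_val Theta q psi s j f = (\<Sum>th\<in>Theta. \<Sum>s'\<in>{s'\<in>K. a s' = a s}. q th * phi th s' * f (th j))"
      unfolding psi_def joint_val_def using True
      by (simp add: sum_distrib_left sum_distrib_right mult.assoc)
    also have "\<dots> = (\<Sum>s'\<in>{s'\<in>K. a s' = a s}. \<Sum>th\<in>Theta. q th * phi th s' * f (th j))"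
      by (rule sum.swap)
    finally show ?thesis using True by (simp add: joint_val_def)
  qed (simp add: psi_def joint_val_def)
  define NR where "NR = K - Reps"
  have "card NR = card K - card Reps"
    unfolding NR_def using RK finK by (simp add: card_Diff_subset finite_subset)
  also have "card Reps = card (a ` K)" using card_image[OF injR] imR by simp
  finally have "card NR = k - card (a ` K)" by (simp add: K_def)
  moreover have "card ({1..n} - a ` K) = n - card (a ` K)"
    using aN by (subst card_Diff_subset) (auto simp: K_def)
  ultimately have "card NR \<le> card ({1..n} - a ` K)" using kn by simp
  then obtain g where g: "g ` NR \<subseteq> {1..n} - a ` K" "inj_on g NR"
    using card_le_inj[of NR "{1..n} - a ` K"] finK by (auto simp: NR_def)
  define b where "b = (\<lambda>s. if s \<in> Reps then a s else g s)"
  have bN: "\<forall>s<k. b s \<in> {1..n}"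
    using aN g(1) by (auto simp: b_def NR_def K_def)
  have injb: "inj_on b {..<k}"
  proof
    fix x y assume xy: "x \<in> {..<k}" "y \<in> {..<k}" "b x = b y"
    show "x = y"
    proof (cases "x \<in> Reps"; cases "y \<in> Reps")
      assume "x \<in> Reps" "y \<in> Reps" then show ?thesis using xy injR by (auto simp: b_def inj_on_def)
    next
      assume "x \<notin> Reps" "y \<notin> Reps" then show ?thesis
        using xy g(2) by (auto simp: b_def inj_on_def NR_def K_def)
    next
      assume "x \<in> Reps" "y \<notin> Reps" then show ?thesis
        using xy g(1) RK by (auto simp: b_def NR_def K_def)
    next
      assume "x \<notin> Reps" "y \<in> Reps" then show ?thesis
        using xy g(1) RK by (fastforce simp: b_def NR_def K_def)
    qed
  qed
  have schpsi: "scheme Theta k psi"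
    unfolding scheme_def
  proof (intro ballI conjI allI impI)
    fix th s assume "th \<in> Theta" "s < k"
    then show "0 \<le> psi th s" using sch by (auto simp: psi_def scheme_def K_def intro!: sum_nonneg)
  next
    fix th assume "th \<in> Theta"
    have "(\<Sum>s<k. psi th s) = (\<Sum>s\<in>K. phi th s)"
      unfolding psi_def K_def[symmetric] by (rule key)
    then show "(\<Sum>s<k. psi th s) = 1" using sch \<open>th \<in> Theta\<close> by (simp add: scheme_def K_def)
  qed
  have ppsi: "pers n k Theta q rho psi b"
    unfolding pers_def
  proof (intro allI impI ballI)
    fix s j assume s: "s < k" and j: "j \<in> {1..n}"
    show "joint_val Theta q psi s j rho \<le> joint_val Theta q psi s (b s) rho"
    proof (cases "s \<in> Reps")
      case True
      have "(\<Sum>s'\<in>{s'\<in>K. a s' = a s}. joint_val Theta q phi s' j rho)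
         \<le> (\<Sum>s'\<in>{s'\<in>K. a s' = a s}. joint_val Theta q phi s' (a s) rho)"
      proof (rule sum_mono)
        fix s' assume "s' \<in> {s'\<in>K. a s' = a s}"
        then show "joint_val Theta q phi s' j rho \<le> joint_val Theta q phi s' (a s) rho"
          using pa j by (auto simp: pers_def K_def)
      qed
      then show ?thesis using True by (simp add: jv b_def)
    qed (simp add: jv)
  qed
  have "Va k Theta q xi psi b = (\<Sum>s\<in>K. if s \<in> Reps then
      (\<Sum>s'\<in>{s'\<in>K. a s' = a s}. joint_val Theta q phi s' (a s') xi) else 0)"
    unfolding Va_def K_def[symmetric] by (intro sum.cong) (auto simp: jv b_def)
  also have "\<dots> = Va k Theta q xi phi a" unfolding Va_def K_def[symmetric] by (rule key)
  finally show ?thesis using schpsi bN injb ppsi by blast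
qed



lemma compact_PiE_UNIV:
  fixes S :: "'a \<Rightarrow> 'b::topological_space set"
  assumes "\<And>i. compact (S i)"
  shows "compact (PiE UNIV S)"
proof -
  have "compactin (product_topology (\<lambda>i. euclidean) UNIV) (PiE UNIV S)"
    by (subst compactin_PiE) (auto simp: assms)
  then show ?thesis by (simp add: euclidean_product_topology)
qed

lemma cont_coord2: "continuous_on UNIV (\<lambda>phi::'a \<Rightarrow> 'b \<Rightarrow> real. phi x y)"
proof -
  have "continuous_on UNIV ((\<lambda>g::'b\<Rightarrow>real. g y) \<circ> (\<lambda>phi::'a \<Rightarrow> 'b \<Rightarrow> real. phi x))"
    by (rule continuous_on_compose) (auto intro: continuous_on_subset[OF continuous_on_product_coordinates])
  then show ?thesis by (simp add: o_def)
qed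

lemma cont_jv: "continuous_on UNIV (\<lambda>phi. joint_val Theta q phi s i f)"
  unfolding joint_val_def
  by (intro continuous_intros cont_coord2)

lemma cont_Va: "continuous_on A (\<lambda>phi. Va k Theta q xi phi b)"
  unfolding Va_def
  by (intro continuous_intros continuous_on_subset[OF cont_jv]) auto



definition nz :: "(nat \<Rightarrow> 't) set \<Rightarrow> nat \<Rightarrow> ((nat \<Rightarrow> 't) \<Rightarrow> nat \<Rightarrow> real) \<Rightarrow> ((nat \<Rightarrow> 't) \<Rightarrow> nat \<Rightarrow> real)" where "nz Theta k psi = (\<lambda>th s. if th \<in> Theta \<and> s < k then psi th s else 0)"

lemma jv_nz: "s < k \<Longrightarrow> joint_val Theta q (nz Theta k psi) s i f = joint_val Theta q psi s i f"
  unfolding joint_val_def nz_def by (intro sum.cong) auto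

lemma pers_nz: "pers n k Theta q rho (nz Theta k psi) b = pers n k Theta q rho psi b"
  unfolding pers_def by (simp add: jv_nz)

lemma Va_nz: "Va k Theta q xi (nz Theta k psi) b = Va k Theta q xi psi b"
  unfolding Va_def by (intro sum.cong) (auto simp: jv_nz)

lemma Va_restrict: "Va k Theta q xi psi (restrict b {..<k}) = Va k Theta q xi psi b"
  unfolding Va_def by (intro sum.cong) auto

lemma pers_restrict: "pers n k Theta q rho psi (restrict b {..<k}) = pers n k Theta q rho psi b"
  unfolding pers_def by auto

definition Sset :: "(nat \<Rightarrow> 't) set \<Rightarrow> nat \<Rightarrow> ((nat \<Rightarrow> 't) \<Rightarrow> nat \<Rightarrow> real) set" where
  "Sset Theta k = (PiE UNIV (\<lambda>th. PiE UNIV (\<lambda>s. if th \<in> Theta \<and> s < k then {0..1} else {0::real})))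
     \<inter> (\<Inter>th\<in>Theta. {phi. (\<Sum>s<k. phi th s) = 1})"

lemma nz_in_S:
  assumes "scheme Theta k psi" shows "nz Theta k psi \<in> Sset Theta k"
proof -
  have "psi th s \<le> 1" if "th \<in> Theta" "s < k" for th s
  proof -
    have "psi th s \<le> (\<Sum>s<k. psi th s)"
      using assms that by (intro member_le_sum) (auto simp: scheme_def)
    then show ?thesis using assms that by (simp add: scheme_def)
  qed
  moreover have "(\<Sum>s<k. nz Theta k psi th s) = 1" if "th \<in> Theta" for th
    using assms that by (simp add: nz_def scheme_def)
  ultimately show ?thesis using assms
    by (auto simp: Sset_def PiE_UNIV_domain nz_def scheme_def)
qed

lemma S_scheme: assumes "phi \<in> Sset Theta k" shows "scheme Theta k phi"
  unfolding scheme_def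
proof (intro ballI conjI allI impI)
  fix th s assume "th \<in> Theta" "s < k"
  moreover have "phi th s \<in> (if th \<in> Theta \<and> s < k then {0..1} else {0})"
  proof -
    have "phi \<in> PiE UNIV (\<lambda>th. PiE UNIV (\<lambda>s. if th \<in> Theta \<and> s < k then {0..1} else {0::real}))"
      using assms by (simp add: Sset_def)
    then have "phi th \<in> PiE UNIV (\<lambda>s. if th \<in> Theta \<and> s < k then {0..1} else {0::real})"
      by (rule PiE_mem) simp
    then show ?thesis by (rule PiE_mem) simp
  qed
  ultimately show "0 \<le> phi th s" by simp
next
  fix th assume "th \<in> Theta" then show "(\<Sum>s<k. phi th s) = 1" using assms by (auto simp: Sset_def)
qed

lemma compact_S:
  fixes Theta :: "(nat \<Rightarrow> 't) set" shows "compact (Sset Theta k)"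
  unfolding Sset_def
proof (rule compact_Int_closed)
  show "compact (PiE UNIV (\<lambda>th. PiE UNIV (\<lambda>s. if th \<in> Theta \<and> s < k then {0..1} else {0::real})))"
    by (intro compact_PiE_UNIV) auto
  show "closed (\<Inter>th\<in>Theta. {phi::(nat \<Rightarrow> 't) \<Rightarrow> nat \<Rightarrow> real. (\<Sum>s<k. phi th s) = 1})"
    by (intro closed_INT ballI closed_Collect_eq continuous_intros cont_coord2)
qed

definition Cset where
  "Cset n k Theta q rho b = Sset Theta k \<inter> (\<Inter>s\<in>{..<k}. \<Inter>j\<in>{1..n}.
     {phi. joint_val Theta q phi s j rho \<le> joint_val Theta q phi s (b s) rho})"

lemma Cset_iff: "phi \<in> Cset n k Theta q rho b \<longleftrightarrow> phi \<in> Sset Theta k \<and> pers n k Theta q rho phi b"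
  by (auto simp: Cset_def pers_def)

lemma compact_C: "compact (Cset n k Theta q rho b)"
  unfolding Cset_def
  by (intro compact_Int_closed compact_S closed_INT ballI closed_Collect_le cont_jv)



lemma opt_exists:
  fixes Theta :: "(nat \<Rightarrow> 't) set"
  assumes k1: "1 \<le> k" and kn: "k \<le> n"
  shows "\<exists>phi b. optimal_scheme n k Theta q rho xi phi \<and> (\<forall>s<k. b s \<in> {1..n}) \<and> inj_on b {..<k}
     \<and> pers n k Theta q rho phi b \<and> Va k Theta q xi phi b = sender_util n k Theta q rho xi phi"
proof -
  define A where "A = {b. b \<in> {..<k} \<rightarrow>\<^sub>E {1..n} \<and> inj_on b {..<k}}"
  have finA: "finite A" unfolding A_def
    by (rule finite_subset[of _ "{..<k} \<rightarrow>\<^sub>E {1..n}"]) (auto intro: finite_PiE)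
  have n1: "1 \<le> n" using k1 kn by simp
  have AN: "\<forall>s<k. b s \<in> {1..n}" if "b \<in> A" for b using that unfolding A_def PiE_def Pi_def by blast
  have claim: "\<exists>b\<in>A. \<exists>phi\<in>Cset n k Theta q rho b. sender_util n k Theta q rho xi psi \<le> Va k Theta q xi phi b"
    if sch: "scheme Theta k psi" for psi
  proof -
    obtain a where a: "\<forall>s<k. a s \<in> {1..n}" "pers n k Theta q rho psi a"
      "Va k Theta q xi psi a = sender_util n k Theta q rho xi psi"
      using util_attained[OF n1, of k Theta q rho psi xi] by blast
    obtain psi1 b1 where m: "scheme Theta k psi1" "\<forall>s<k. b1 s \<in> {1..n}" "inj_on b1 {..<k}"
      "pers n k Theta q rho psi1 b1" "Va k Theta q xi psi1 b1 = Va k Theta q xi psi a"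
      using merge[OF sch a(1,2) kn, of xi] by blast
    define b where "b = restrict b1 {..<k}"
    have "b \<in> A" using m(2,3) by (auto simp: A_def b_def inj_on_def)
    moreover have "nz Theta k psi1 \<in> Cset n k Theta q rho b"
      using nz_in_S[OF m(1)] m(4) by (simp add: Cset_iff pers_nz b_def pers_restrict)
    moreover have "Va k Theta q xi (nz Theta k psi1) b = sender_util n k Theta q rho xi psi"
      using m(5) a(3) by (simp add: Va_nz b_def Va_restrict)
    ultimately show ?thesis by (intro bexI[of _ b] bexI[of _ "nz Theta k psi1"]) auto
  qed
  define A' where "A' = {b\<in>A. Cset n k Theta q rho b \<noteq> {}}"
  define psi0 :: "(nat \<Rightarrow> 't) \<Rightarrow> nat \<Rightarrow> real" where "psi0 = (\<lambda>th s. if s = 0 then 1 else 0)"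
  have "scheme Theta k psi0" using k1 by (auto simp: scheme_def psi0_def)
  from claim[OF this] have A'ne: "A' \<noteq> {}" unfolding A'_def by blast
  have finA': "finite A'" using finA by (simp add: A'_def)
  have "\<forall>b\<in>A'. \<exists>x. x \<in> Cset n k Theta q rho b \<and> (\<forall>y\<in>Cset n k Theta q rho b. Va k Theta q xi y b \<le> Va k Theta q xi x b)"
  proof
    fix b assume "b \<in> A'"
    then have "\<exists>x\<in>Cset n k Theta q rho b. \<forall>y\<in>Cset n k Theta q rho b. Va k Theta q xi y b \<le> Va k Theta q xi x b"
      by (intro continuous_attains_sup compact_C cont_Va) (auto simp: A'_def)
    then show "\<exists>x. x \<in> Cset n k Theta q rho b \<and> (\<forall>y\<in>Cset n k Theta q rho b. Va k Theta q xi y b \<le> Va k Theta q xi x b)"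
      by blast
  qed
  then obtain m where m0: "\<forall>b\<in>A'. m b \<in> Cset n k Theta q rho b \<and>
      (\<forall>y\<in>Cset n k Theta q rho b. Va k Theta q xi y b \<le> Va k Theta q xi (m b) b)"
    by (rule bchoice[elim_format]) blast
  have m: "\<And>b. b \<in> A' \<Longrightarrow> m b \<in> Cset n k Theta q rho b \<and>
      (\<forall>y\<in>Cset n k Theta q rho b. Va k Theta q xi y b \<le> Va k Theta q xi (m b) b)"
    using m0 by blast
  define M where "M = Max ((\<lambda>b. Va k Theta q xi (m b) b) ` A')"
  have "M \<in> (\<lambda>b. Va k Theta q xi (m b) b) ` A'" unfolding M_def using finA' A'ne by (intro Max_in) auto
  then obtain bs where bs: "bs \<in> A'" "Va k Theta q xi (m bs) bs = M" by auto
  have Mge: "Va k Theta q xi (m b) b \<le> M" if "b \<in> A'" for b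
    unfolding M_def using finA' that by (intro Max_ge) auto
  define phi where "phi = m bs"
  have phiC: "phi \<in> Cset n k Theta q rho bs" using m[OF bs(1)] by (simp add: phi_def)
  have sphi: "scheme Theta k phi" using phiC by (auto simp: Cset_iff intro: S_scheme)
  have pphi: "pers n k Theta q rho phi bs" using phiC by (simp add: Cset_iff)
  have bsN: "\<forall>s<k. bs s \<in> {1..n}" using bs(1) AN by (auto simp: A'_def)
  have bsinj: "inj_on bs {..<k}" using bs(1) by (auto simp: A'_def A_def)
  have up: "Va k Theta q xi phi bs \<le> sender_util n k Theta q rho xi phi"
    by (rule Va_le_util[OF bsN pphi])
  have bound: "sender_util n k Theta q rho xi psi \<le> Va k Theta q xi phi bs"
    if sp: "scheme Theta k psi" for psi
  proof -
    obtain b phi' where b: "b \<in> A" "phi' \<in> Cset n k Theta q rho b"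
      "sender_util n k Theta q rho xi psi \<le> Va k Theta q xi phi' b"
      using claim[OF sp] by blast
    then have bA': "b \<in> A'" unfolding A'_def by blast
    have "Va k Theta q xi phi' b \<le> Va k Theta q xi (m b) b" using m[OF bA'] b(2) by blast
    also have "\<dots> \<le> M" by (rule Mge[OF bA'])
    finally show ?thesis using b(3) bs(2) phi_def by simp
  qed
  have "optimal_scheme n k Theta q rho xi phi"
    unfolding optimal_scheme_def
  proof (intro conjI allI impI)
    fix psi assume "scheme Theta k psi"
    from bound[OF this] up show "sender_util n k Theta q rho xi psi \<le> sender_util n k Theta q rho xi phi"
      by linarith
  qed (rule sphi)
  moreover have "Va k Theta q xi phi bs = sender_util n k Theta q rho xi phi"
    using up bound[OF sphi] by simp
  ultimately show ?thesis using bsN bsinj pphi by blast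
qed



lemma exists_perm:
  assumes "finite N" "R \<subseteq> N" "T \<subseteq> N" "card R = card T"
  shows "\<exists>p. p permutes N \<and> p ` R = T"
proof -
  have fR: "finite R" "finite T" using assms finite_subset by auto
  obtain f1 where f1: "bij_betw f1 R T" using finite_same_card_bij[OF fR assms(4)] by blast
  have "card (N - R) = card (N - T)"
    using assms fR by (simp add: card_Diff_subset)
  then obtain f2 where f2: "bij_betw f2 (N - R) (N - T)"
    using finite_same_card_bij[of "N - R" "N - T"] assms(1) by (meson finite_Diff)
  define p where "p = (\<lambda>x. if x \<in> R then f1 x else if x \<in> N - R then f2 x else x)"
  have b1: "bij_betw p R T" using f1 by (rule bij_betw_cong[THEN iffD1, rotated]) (simp add: p_def)
  have b2: "bij_betw p (N - R) (N - T)" using f2 by (rule bij_betw_cong[THEN iffD1, rotated]) (simp add: p_def)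
  have "bij_betw p (R \<union> (N - R)) (T \<union> (N - T))" by (rule bij_betw_combine[OF b1 b2]) auto
  then have "bij_betw p N N" using assms(2,3) by (simp add: Un_absorb1 Un_Diff_cancel)
  moreover have "\<forall>x. x \<notin> N \<longrightarrow> p x = x" using assms(2) by (auto simp: p_def)
  ultimately have "p permutes N" by (intro bij_imp_permutes) auto
  moreover have "p ` R = T" using b1 by (simp add: bij_betw_def)
  ultimately show ?thesis by blast
qed

lemma sym_transfer:
  fixes Theta :: "(nat \<Rightarrow> 't) set"
  assumes bp: "bp_instance n Theta q" and sym: "symmetric_inst n Theta q"
    and pp: "p permutes {1..n}"
  shows "joint_val Theta q (\<lambda>th s. if th \<circ> p \<in> Theta then phi (th \<circ> p) s else (if s = 0 then 1 else 0)) s i f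
       = joint_val Theta q phi s (inv p i) f"
proof -
  define psi where "psi = (\<lambda>th s. if th \<circ> p \<in> Theta then phi (th \<circ> p) s else (if s = (0::nat) then 1 else (0::real)))"
  define P where "P = {th\<in>Theta. q th \<noteq> 0}"
  have finT: "finite Theta" using bp by (simp add: bp_instance_def)
  have finP: "finite P" using finT by (simp add: P_def)
  have hq: "th \<circ> p \<in> Theta \<and> q (th \<circ> p) = q th" if "th \<in> P" for th
  proof -
    have "(if th \<in> Theta then q th else 0) = (if th \<circ> p \<in> Theta then q (th \<circ> p) else 0)"
    proof -
      have "\<forall>p th. p permutes {1..n} \<longrightarrow> (if th \<in> Theta then q th else 0) = (if th \<circ> p \<in> Theta then q (th \<circ> p) else 0)"
        using sym unfolding symmetric_inst_def .
      then show ?thesis using pp by (elim allE[of _ p] allE[of _ th]) (erule mp)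
    qed
    then show ?thesis using that by (auto simp: P_def split: if_splits)
  qed
  define h where "h = (\<lambda>th::nat \<Rightarrow> 't. th \<circ> p)"
  have cancel: "(th \<circ> p) (inv p x) = th x" for th :: "nat \<Rightarrow> 't" and x
    using permutes_inverses(1)[OF pp] by simp
  have injh: "inj_on h P"
  proof
    fix x y assume "x \<in> P" "y \<in> P" "h x = h y"
    then have "(x \<circ> p) (inv p z) = (y \<circ> p) (inv p z)" for z by (simp add: h_def)
    then show "x = y" by (intro ext) (metis cancel)
  qed
  have hP: "h ` P = P"
    by (rule endo_inj_surj[OF finP _ injh]) (use hq in \<open>auto simp: h_def P_def\<close>)
  have "joint_val Theta q psi s i f = (\<Sum>th\<in>P. q th * psi th s * f (th i))"
    unfolding joint_val_def using finT by (intro sum.mono_neutral_right) (auto simp: P_def)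
  also have "\<dots> = (\<Sum>th\<in>P. (\<lambda>u. q u * phi u s * f (u (inv p i))) (h th))"
    by (intro sum.cong refl) (use hq in \<open>auto simp: psi_def h_def permutes_inverses(1)[OF pp]\<close>)
  also have "\<dots> = (\<Sum>u\<in>h ` P. q u * phi u s * f (u (inv p i)))"
    by (simp add: sum.reindex[OF injh])
  also have "\<dots> = joint_val Theta q phi s (inv p i) f"
    unfolding hP joint_val_def using finT by (intro sum.mono_neutral_left) (auto simp: P_def)
  finally show ?thesis by (simp add: psi_def)
qed



lemma pers_dp:
  assumes "\<forall>s<k. b s \<in> {1..n}" "pers n k Theta q rho phi b"
  shows "direct_persuasive n k Theta q rho phi b"
  unfolding direct_persuasive_def cond_exp_def
proof (intro conjI allI impI ballI)
  fix s j assume "s < k" "0 < sig_prob Theta q phi s" "j \<in> {1..n}"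
  then show "joint_val Theta q phi s j rho / sig_prob Theta q phi s
      \<le> joint_val Theta q phi s (b s) rho / sig_prob Theta q phi s"
    using assms(2) by (intro divide_right_mono) (auto simp: pers_def)
qed (use assms(1) in auto)

theorem lemma2p1:
  fixes n k :: nat
    and Theta :: "(nat \<Rightarrow> 't) set"
    and q :: "(nat \<Rightarrow> 't) \<Rightarrow> real"
    and rho xi :: "'t \<Rightarrow> real"
  assumes "2 \<le> k" and "k \<le> n"
    and "bp_instance n Theta q"
  shows "(\<exists>phi rec. optimal_scheme n k Theta q rho xi phi
                  \<and> direct_persuasive n k Theta q rho phi rec \<and> inj_on rec {..<k})
       \<and> (symmetric_inst n Theta q \<longrightarrow>
           (\<exists>phi rec. optimal_scheme n k Theta q rho xi phi
                  \<and> direct_persuasive n k Theta q rho phi rec \<and> inj_on rec {..<k}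
                  \<and> rec ` {..<k} = {1..k}))"
proof -
  have k1: "1 \<le> k" using assms(1) by simp
  obtain phi b where ob: "optimal_scheme n k Theta q rho xi phi" "\<forall>s<k. b s \<in> {1..n}"
    "inj_on b {..<k}" "pers n k Theta q rho phi b"
    "Va k Theta q xi phi b = sender_util n k Theta q rho xi phi"
    using opt_exists[OF k1 assms(2), of Theta q rho xi] by blast
  have part1: "\<exists>phi rec. optimal_scheme n k Theta q rho xi phi
                  \<and> direct_persuasive n k Theta q rho phi rec \<and> inj_on rec {..<k}"
    using ob pers_dp by blast
  have part2: "\<exists>phi rec. optimal_scheme n k Theta q rho xi phi
                  \<and> direct_persuasive n k Theta q rho phi rec \<and> inj_on rec {..<k}
                  \<and> rec ` {..<k} = {1..k}" if sym: "symmetric_inst n Theta q"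
  proof -
    have "card (b ` {..<k}) = card {1..k}" using card_image[OF ob(3)] by simp
    moreover have "b ` {..<k} \<subseteq> {1..n}" using ob(2) by auto
    moreover have "{1..k} \<subseteq> {1..n}" using assms(2) by auto
    ultimately obtain p where pp: "p permutes {1..n}" and pimg: "p ` (b ` {..<k}) = {1..k}"
      using exists_perm[of "{1..n}" "b ` {..<k}" "{1..k}"] by auto
    define psi where "psi = (\<lambda>th s. if th \<circ> p \<in> Theta then phi (th \<circ> p) s else (if s = (0::nat) then 1 else (0::real)))"
    have jv: "joint_val Theta q psi s i f = joint_val Theta q phi s (inv p i) f" for s i f
      unfolding psi_def by (rule sym_transfer[OF assms(3) sym pp])
    have schphi: "scheme Theta k phi" using ob(1) by (simp add: optimal_scheme_def)
    have schpsi: "scheme Theta k psi"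
      unfolding scheme_def
    proof (intro ballI conjI allI impI)
      fix th s assume "th \<in> Theta" "s < k"
      then show "0 \<le> psi th s" using schphi by (auto simp: psi_def scheme_def)
    next
      fix th assume "th \<in> Theta"
      show "(\<Sum>s<k. psi th s) = 1"
      proof (cases "th \<circ> p \<in> Theta")
        case True then show ?thesis using schphi by (simp add: psi_def scheme_def)
      next
        case False then show ?thesis using k1 by (simp add: psi_def)
      qed
    qed
    have pinv: "inv p (p x) = x" for x using permutes_inverses(2)[OF pp] by simp
    have pN: "p x \<in> {1..n}" if "x \<in> {1..n}" for x using permutes_in_image[OF pp] that by simp
    have ipN: "inv p x \<in> {1..n}" if "x \<in> {1..n}" for x
      using permutes_in_image[OF permutes_inv[OF pp]] that by simp
    define rec where "rec = p \<circ> b"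
    have recN: "\<forall>s<k. rec s \<in> {1..n}" using ob(2) pN by (simp add: rec_def)
    have prec: "pers n k Theta q rho psi rec"
      unfolding pers_def
    proof (intro allI impI ballI)
      fix s j assume "s < k" "j \<in> {1..n}"
      then show "joint_val Theta q psi s j rho \<le> joint_val Theta q psi s (rec s) rho"
        using ob(4) ipN by (auto simp: jv rec_def pinv pers_def)
    qed
    have "Va k Theta q xi psi rec = Va k Theta q xi phi b"
      unfolding Va_def by (intro sum.cong) (auto simp: jv rec_def pinv)
    then have eqv: "Va k Theta q xi psi rec = sender_util n k Theta q rho xi phi" using ob(5) by simp
    have "sender_util n k Theta q rho xi phi \<le> sender_util n k Theta q rho xi psi"
      using Va_le_util[OF recN prec, of xi] eqv by simp
    then have opt: "optimal_scheme n k Theta q rho xi psi"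
      using ob(1) schpsi unfolding optimal_scheme_def by (meson order_trans)
    have injrec: "inj_on rec {..<k}"
      unfolding rec_def by (rule comp_inj_on[OF ob(3)]) (rule inj_on_subset[OF permutes_inj[OF pp]], simp)
    have "rec ` {..<k} = {1..k}" using pimg by (simp add: rec_def image_comp)
    then show ?thesis using opt pers_dp[OF recN prec] injrec by blast
  qed
  show ?thesis using part1 part2 by blast
qed


end
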